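(* Let $B,V$ be non-empty disjoint compact subsets of $\mathbf S^3$. There is a constant $C>0$ such that for any $x,x'\in B$, any $u,u'\in\mathcal L_{\mathbb C}$ such that the chain $L_u$ passes through $x$, the chain $L_{u'}$ passes through $x'$, and both meet $V$, and any $r>0$, \[\pi_x^{-1}(B(u,r))\cap V\subset\pi_{x'}^{-1}\big(B(u',C(r+d_E(u,u')))\big),\] where $B(u,r)$ denotes the closed $d_E$-ball in $\mathbb P^2_{\mathbb C}$.
   Context: On $\mathbb{C}^3$: $u\cdot v=\sum u_i\bar v_i$, $\|u\|=\sqrt{u\cdot u}$, $\langle u,v\rangle=u_0\bar v_0-u_1\bar v_1-u_2\bar v_2$, $q(u)=\langle u,u\rangle$, $\|u\wedge v\|^2=\|u\|^2\|v\|^2-|u\cdot v|^2$. On $\mathbb P^2_{\mathbb C}$, $d_E(u,v)=\|u\wedge v\|/(\|u\|\|v\|)$. $\mathbf S^3=\{u:q(u)=0\}$. $\mathcal L_{\mathbb C}=\{w:q(w)<0\}$, $w^\perp=\{u:\langle u,w\rangle=0\}$, $L_w=w^\perp\cap\mathbf S^3$ (a chain). For $x\in\mathbf S^3$ and $y\in\mathbf S^3\setminus\{x\}$, $\pi_x(y)$ is the unique intersection point of $x^\perp$ and $y^\perp$; $\pi_x^{-1}(A)=\{y\in\mathbf S^3\setminus\{x\}:\pi_x(y)\in A\}$. *)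

theory Defs
  imports "HOL-Analysis.Analysis"
begin

text \<open>Points of P^2_C are represented by nonzero vectors; subsets of P^2_C by
 cones: sets of nonzero vectors closed under multiplication by nonzero scalars.\<close>

definition cdot :: "complex^3 \<Rightarrow> complex^3 \<Rightarrow> complex" where
  "cdot u v = (\<Sum>i\<in>UNIV. u$i * cnj (v$i))"

definition herm :: "complex^3 \<Rightarrow> complex^3 \<Rightarrow> complex" where
  "herm u v = u$0 * cnj (v$0) - u$1 * cnj (v$1) - u$2 * cnj (v$2)"

definition qf :: "complex^3 \<Rightarrow> real" where
  "qf u = Re (herm u u)"

definition wedge_norm :: "complex^3 \<Rightarrow> complex^3 \<Rightarrow> real" where
  "wedge_norm u v = sqrt ((norm u)^2 * (norm v)^2 - (cmod (cdot u v))^2)"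

definition dE :: "complex^3 \<Rightarrow> complex^3 \<Rightarrow> real" where
  "dE u v = wedge_norm u v / (norm u * norm v)"

definition proj_eq :: "complex^3 \<Rightarrow> complex^3 \<Rightarrow> bool" where
  "proj_eq u v \<longleftrightarrow> u \<noteq> 0 \<and> v \<noteq> 0 \<and> (\<exists>c. c \<noteq> 0 \<and> v = c *s u)"

definition proj_set :: "(complex^3) set \<Rightarrow> bool" where
  "proj_set A \<longleftrightarrow> (\<forall>a\<in>A. a \<noteq> 0) \<and> (\<forall>a\<in>A. \<forall>c. c \<noteq> 0 \<longrightarrow> c *s a \<in> A)"

text \<open>Compactness in P^2_C (quotient topology of the unit sphere of C^3).\<close>
definition proj_compact :: "(complex^3) set \<Rightarrow> bool" where
  "proj_compact A \<longleftrightarrow> compact {a\<in>A. norm a = 1}"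

definition S3 :: "(complex^3) set" where
  "S3 = {u. u \<noteq> 0 \<and> qf u = 0}"

definition LC :: "(complex^3) set" where
  "LC = {w. qf w < 0}"

definition chain :: "complex^3 \<Rightarrow> (complex^3) set" where
  "chain w = {u\<in>S3. herm u w = 0}"

text \<open>pi_x(y): a representative of the unique intersection point of x^perp and y^perp.\<close>
definition proj_pi :: "complex^3 \<Rightarrow> complex^3 \<Rightarrow> complex^3" where
  "proj_pi x y = (SOME p. p \<noteq> 0 \<and> herm p x = 0 \<and> herm p y = 0)"

definition pi_inv :: "complex^3 \<Rightarrow> (complex^3) set \<Rightarrow> (complex^3) set" where
  "pi_inv x A = {y\<in>S3. \<not> proj_eq x y \<and> proj_pi x y \<in> A}"

definition dball :: "complex^3 \<Rightarrow> real \<Rightarrow> (complex^3) set" where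
  "dball u r = {p. p \<noteq> 0 \<and> dE u p \<le> r}"

end

theory Submission
  imports Defs
begin


lemma UNIV3: "(UNIV::3 set) = {0,1,2}"
  using UNIV_3 by auto

lemma sum3: "sum f (UNIV::3 set) = f 0 + f 1 + f 2"
  unfolding UNIV3 by (simp add: ac_simps)

lemma vec3_eq: "(x::'a^3) = y \<longleftrightarrow> x$0 = y$0 \<and> x$1 = y$1 \<and> x$2 = y$2"
  unfolding vec_eq_iff using UNIV3 by (metis UNIV_I insertE singletonD)

lemma norm2: "(norm (x::complex^3))^2 = (cmod (x$0))^2 + (cmod (x$1))^2 + (cmod (x$2))^2"
  unfolding norm_vec_def L2_set_def by (simp add: sum3)

lemma cmod_sq: "complex_of_real ((cmod z)^2) = z * cnj z"
  using complex_norm_square[of z] by simp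

lemma cmod_sq2: "(complex_of_real (cmod z))^2 = z * cnj z"
  using cmod_sq[of z] by simp

lemma cdot_self: "cdot x x = complex_of_real ((norm x)^2)"
  unfolding cdot_def norm2 sum3 of_real_add cmod_sq by simp

lemma herm_self: "herm x x = complex_of_real (qf x)"
  unfolding qf_def herm_def by (simp add: complex_eq_iff)

lemma qf_expand: "qf x = (cmod (x$0))^2 - (cmod (x$1))^2 - (cmod (x$2))^2"
  unfolding cmod_power2 qf_def herm_def by (simp add: power2_eq_square)

lemma herm_add_left: "herm (a+b) c = herm a c + herm b c"
  unfolding herm_def by (simp add: algebra_simps)
lemma herm_add_right: "herm c (a+b) = herm c a + herm c b"
  unfolding herm_def by (simp add: algebra_simps)
lemma herm_diff_left: "herm (a-b) c = herm a c - herm b c"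
  unfolding herm_def by (simp add: algebra_simps)
lemma herm_diff_right: "herm c (a-b) = herm c a - herm c b"
  unfolding herm_def by (simp add: algebra_simps)
lemma herm_smult_left: "herm (k *s a) b = k * herm a b"
  unfolding herm_def by (simp add: algebra_simps)
lemma herm_smult_right: "herm a (k *s b) = cnj k * herm a b"
  unfolding herm_def by (simp add: algebra_simps)
lemma herm_sym: "herm b a = cnj (herm a b)"
  unfolding herm_def by (simp add: algebra_simps)

lemma cdot_add_left: "cdot (a+b) c = cdot a c + cdot b c"
  unfolding cdot_def sum3 by (simp add: algebra_simps)
lemma cdot_add_right: "cdot c (a+b) = cdot c a + cdot c b"
  unfolding cdot_def sum3 by (simp add: algebra_simps)
lemma cdot_diff_left: "cdot (a-b) c = cdot a c - cdot b c"
  unfolding cdot_def sum3 by (simp add: algebra_simps)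
lemma cdot_diff_right: "cdot c (a-b) = cdot c a - cdot c b"
  unfolding cdot_def sum3 by (simp add: algebra_simps)
lemma cdot_smult_left: "cdot (k *s a) b = k * cdot a b"
  unfolding cdot_def sum3 by (simp add: algebra_simps)
lemma cdot_smult_right: "cdot a (k *s b) = cnj k * cdot a b"
  unfolding cdot_def sum3 by (simp add: algebra_simps)
lemma cdot_sym: "cdot b a = cnj (cdot a b)"
  unfolding cdot_def sum3 by (simp add: algebra_simps)

lemma norm_smult: "norm (k *s (x::complex^3)) = cmod k * norm x"
proof -
  have "(norm (k *s x))^2 = (cmod k)^2 * (norm x)^2"
    unfolding norm2 by (simp add: norm_mult power_mult_distrib algebra_simps)
  hence "(norm (k *s x))^2 = (cmod k * norm x)^2" by (simp add: power_mult_distrib)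
  thus ?thesis using power2_eq_iff_nonneg by (metis norm_ge_zero zero_le_mult_iff)
qed

lemma qf_smult: "qf (k *s x) = (cmod k)^2 * qf x"
proof -
  have "herm (k *s x) (k *s x) = k * cnj k * herm x x"
    by (simp add: herm_smult_left herm_smult_right)
  hence "complex_of_real (qf (k *s x)) = complex_of_real ((cmod k)^2 * qf x)"
    by (simp add: herm_self cmod_sq2)
  thus ?thesis using of_real_eq_iff by blast
qed


lemma proj_norm:
  assumes "a \<noteq> 0"
  shows "(norm (b - (cdot b a / complex_of_real ((norm a)^2)) *s a))^2
           = (norm b)^2 - (cmod (cdot b a))^2 / (norm a)^2"
proof -
  define N where "N = (norm a)^2"
  define d where "d = cdot b a"
  define t where "t = d / complex_of_real N"
  have N: "N > 0" using assms unfolding N_def by simp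
  have "complex_of_real ((norm (b - t *s a))^2) = cdot (b - t *s a) (b - t *s a)"
    by (simp only: cdot_self)
  also have "\<dots> = cdot b b - cnj t * d - t * cdot a b + t * cnj t * cdot a a"
    unfolding d_def cdot_diff_left cdot_diff_right cdot_smult_left cdot_smult_right by (simp add: algebra_simps)
  also have "\<dots> = complex_of_real ((norm b)^2) - complex_of_real ((cmod d)^2 / N)"
  proof -
    have Nc: "complex_of_real N \<noteq> 0" using N by simp
    have e: "complex_of_real ((cmod d)^2 / N) = d * cnj d / complex_of_real N"
      by (simp add: cmod_sq2)
    have h1: "cnj t * d = d * cnj d / complex_of_real N" unfolding t_def by simp
    have h2: "t * cdot a b = d * cnj d / complex_of_real N"
      unfolding t_def d_def using cdot_sym[of a b] by simp
    have h3: "t * cnj t * cdot a a = d * cnj d / complex_of_real N"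
      unfolding t_def cdot_self N_def[symmetric] using Nc by (simp add: power2_eq_square)
    show ?thesis unfolding e h1 h2 h3 unfolding cdot_self by simp
  qed
  finally have "complex_of_real ((norm (b - t *s a))^2) = complex_of_real ((norm b)^2 - (cmod d)^2 / N)"
    by simp
  thus ?thesis unfolding t_def d_def N_def using of_real_eq_iff by blast
qed


lemma cdot_le: "cmod (cdot b a) \<le> norm a * norm b"
proof (cases "a = 0")
  case True thus ?thesis by (simp add: cdot_def)
next
  case False
  have "0 \<le> (norm b)^2 - (cmod (cdot b a))^2 / (norm a)^2"
    using proj_norm[OF False, of b] by (metis zero_le_power2)
  hence "(cmod (cdot b a))^2 \<le> (norm a * norm b)^2"
    using False by (simp add: field_simps power_mult_distrib)
  thus ?thesis by (rule power2_le_imp_le) simp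
qed

lemma wedge_sym: "wedge_norm a b = wedge_norm b a"
  unfolding wedge_norm_def using cdot_sym[of a b] by (simp add: mult.commute)

lemma dE_sym: "dE a b = dE b a"
  unfolding dE_def using wedge_sym by (simp add: mult.commute)

lemma wedge_le: "wedge_norm a b \<le> norm a * norm b"
proof -
  have "wedge_norm a b \<le> sqrt ((norm a)^2 * (norm b)^2)"
    unfolding wedge_norm_def by simp
  also have "\<dots> = norm a * norm b" by (simp add: real_sqrt_mult)
  finally show ?thesis .
qed

lemma wedge_proj:
  assumes "a \<noteq> 0"
  shows "norm (b - (cdot b a / complex_of_real ((norm a)^2)) *s a) = wedge_norm b a / norm a"
proof -
  have na: "norm a > 0" using assms by simp
  have "(norm (b - (cdot b a / complex_of_real ((norm a)^2)) *s a))^2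
      = ((norm b)^2 * (norm a)^2 - (cmod (cdot b a))^2) / (norm a)^2"
    unfolding proj_norm[OF assms] using na by (simp add: field_simps)
  hence "norm (b - (cdot b a / complex_of_real ((norm a)^2)) *s a)
       = sqrt (((norm b)^2 * (norm a)^2 - (cmod (cdot b a))^2) / (norm a)^2)"
    by (metis norm_ge_zero real_sqrt_unique)
  also have "\<dots> = sqrt ((norm b)^2 * (norm a)^2 - (cmod (cdot b a))^2) / sqrt ((norm a)^2)"
    by (rule real_sqrt_divide)
  also have "\<dots> = wedge_norm b a / norm a"
    unfolding wedge_norm_def by simp
  finally show ?thesis .
qed

lemma wedge_shift:
  assumes "a \<noteq> 0"
  shows "wedge_norm (b + k *s a) a = wedge_norm b a"
proof -
  have na: "norm a > 0" using assms by simp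
  have Nc: "complex_of_real ((norm a)^2) \<noteq> 0" using na by simp
  have t: "cdot (b + k *s a) a / complex_of_real ((norm a)^2) = cdot b a / complex_of_real ((norm a)^2) + k"
    using Nc unfolding cdot_add_left cdot_smult_left cdot_self by (simp add: field_simps)
  have "b + k *s a - (cdot (b + k *s a) a / complex_of_real ((norm a)^2)) *s a
        = b - (cdot b a / complex_of_real ((norm a)^2)) *s a"
    unfolding t by (simp add: vec_eq_iff algebra_simps)
  hence "wedge_norm (b + k *s a) a / norm a = wedge_norm b a / norm a"
    by (metis wedge_proj[OF assms])
  thus ?thesis using na by simp
qed

lemma wedge_smult: "wedge_norm (c *s b) a = cmod c * wedge_norm b a"
proof -
  have "(norm (c *s b))^2 * (norm a)^2 - (cmod (cdot (c *s b) a))^2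
      = (cmod c)^2 * ((norm b)^2 * (norm a)^2 - (cmod (cdot b a))^2)"
    unfolding norm_smult cdot_smult_left norm_mult by (simp add: algebra_simps power_mult_distrib)
  hence "wedge_norm (c *s b) a = sqrt ((cmod c)^2) * sqrt ((norm b)^2 * (norm a)^2 - (cmod (cdot b a))^2)"
    unfolding wedge_norm_def by (metis real_sqrt_mult)
  thus ?thesis unfolding wedge_norm_def by simp
qed

lemma dE_smult:
  assumes "c \<noteq> 0"
  shows "dE a (c *s b) = dE a b"
proof -
  have "wedge_norm a (c *s b) = cmod c * wedge_norm a b"
    using wedge_smult wedge_sym by metis
  hence "dE a (c *s b) = (cmod c * wedge_norm a b) / (cmod c * (norm a * norm b))"
    unfolding dE_def norm_smult by (simp add: ac_simps)
  also have "\<dots> = dE a b" unfolding dE_def using assms by simp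
  finally show ?thesis .
qed

definition Jop :: "complex^3 \<Rightarrow> complex^3" where
  "Jop z = (\<chi> i. if i = 0 then z$i else - z$i)"

lemma herm_cdot: "herm y z = cdot y (Jop z)"
  unfolding herm_def cdot_def Jop_def sum3 by simp

lemma norm_Jop: "norm (Jop z) = norm z"
proof -
  have "(norm (Jop z))^2 = (norm z)^2" unfolding norm2 Jop_def by simp
  thus ?thesis by (simp add: power2_eq_iff_nonneg)
qed

lemma herm_le: "cmod (herm y z) \<le> norm y * norm z"
  unfolding herm_cdot using cdot_le[of y "Jop z"] norm_Jop by (simp add: mult.commute)

lemma neg_qf_le: "- qf z \<le> (norm z)^2"
  unfolding qf_expand norm2 by simp



definition Pc :: "complex^3 \<Rightarrow> complex^3 \<Rightarrow> complex^3" where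
  "Pc x y = (\<chi> i. if i = 0 then cnj(x$1)*cnj(y$2) - cnj(x$2)*cnj(y$1)
     else if i = 1 then cnj(x$0)*cnj(y$2) - cnj(x$2)*cnj(y$0)
     else cnj(x$1)*cnj(y$0) - cnj(x$0)*cnj(y$1))"

lemma Pc0: "Pc x y $ 0 = cnj(x$1)*cnj(y$2) - cnj(x$2)*cnj(y$1)"
  and Pc1: "Pc x y $ 1 = cnj(x$0)*cnj(y$2) - cnj(x$2)*cnj(y$0)"
  and Pc2: "Pc x y $ 2 = cnj(x$1)*cnj(y$0) - cnj(x$0)*cnj(y$1)"
  unfolding Pc_def by simp_all

lemma herm_Pc: "herm (Pc x y) x = 0" "herm (Pc x y) y = 0"
  unfolding herm_def Pc0 Pc1 Pc2 by (simp_all add: algebra_simps)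

lemma herm_Pc_c: "herm (Pc x y) (Pc x y) = herm x x * herm y y - herm x y * cnj (herm x y)"
  unfolding herm_def Pc0 Pc1 Pc2 by (simp add: algebra_simps)

lemma qf_Pc: "qf (Pc x y) = qf x * qf y - (cmod (herm x y))^2"
proof -
  have "complex_of_real (qf (Pc x y)) = complex_of_real (qf x * qf y - (cmod (herm x y))^2)"
    using herm_Pc_c[of x y] by (simp add: herm_self cmod_sq2)
  thus ?thesis using of_real_eq_iff by blast
qed

lemma cdot_Pc_c: "cdot (Pc x y) (Pc x y) + cdot x y * cnj (cdot x y) = cdot x x * cdot y y"
  unfolding cdot_def sum3 Pc0 Pc1 Pc2 by (simp add: algebra_simps)

lemma norm_Pc: "(norm (Pc x y))^2 \<le> (norm x)^2 * (norm y)^2"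
proof -
  have "complex_of_real ((norm (Pc x y))^2 + (cmod (cdot x y))^2) = complex_of_real ((norm x)^2 * (norm y)^2)"
    using cdot_Pc_c[of x y] by (simp add: cdot_self cmod_sq2)
  hence "(norm (Pc x y))^2 + (cmod (cdot x y))^2 = (norm x)^2 * (norm y)^2"
    using of_real_eq_iff by blast
  thus ?thesis by (metis le_add_same_cancel1 zero_le_power2)
qed

lemma par_Pc:
  assumes "herm p x = 0" "herm p y = 0" "Pc x y \<noteq> 0"
  shows "\<exists>c. p = c *s Pc x y"
proof -
  let ?P = "Pc x y"
  have r01: "p$0 * ?P$1 = p$1 * ?P$0"
  proof -
    have "p$0 * ?P$1 - p$1 * ?P$0 = cnj (y$2) * herm p x - cnj (x$2) * herm p y"
      unfolding herm_def Pc0 Pc1 Pc2 by (simp add: algebra_simps)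
    thus ?thesis using assms by simp
  qed
  have r02: "p$0 * ?P$2 = p$2 * ?P$0"
  proof -
    have "p$0 * ?P$2 - p$2 * ?P$0 = cnj (x$1) * herm p y - cnj (y$1) * herm p x"
      unfolding herm_def Pc0 Pc1 Pc2 by (simp add: algebra_simps)
    thus ?thesis using assms by simp
  qed
  have r12: "p$1 * ?P$2 = p$2 * ?P$1"
  proof -
    have "p$1 * ?P$2 - p$2 * ?P$1 = cnj (x$0) * herm p y - cnj (y$0) * herm p x"
      unfolding herm_def Pc0 Pc1 Pc2 by (simp add: algebra_simps)
    thus ?thesis using assms by simp
  qed
  have "?P$0 \<noteq> 0 \<or> ?P$1 \<noteq> 0 \<or> ?P$2 \<noteq> 0" using assms(3) vec3_eq[of ?P 0] by auto
  thus ?thesis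
  proof (elim disjE)
    assume h: "?P$0 \<noteq> 0"
    show ?thesis
      by (rule exI[of _ "p$0 / ?P$0"]) (use h r01 r02 in \<open>simp add: vec3_eq field_simps\<close>)
  next
    assume h: "?P$1 \<noteq> 0"
    show ?thesis
      by (rule exI[of _ "p$1 / ?P$1"]) (use h r01 r12 in \<open>simp add: vec3_eq field_simps\<close>)
  next
    assume h: "?P$2 \<noteq> 0"
    show ?thesis
      by (rule exI[of _ "p$2 / ?P$2"]) (use h r02 r12 in \<open>simp add: vec3_eq field_simps\<close>)
  qed
qed

lemma S3_0: assumes "x \<in> S3" shows "(cmod (x$0))^2 = (cmod (x$1))^2 + (cmod (x$2))^2" "x$0 \<noteq> 0"
proof -
  show e: "(cmod (x$0))^2 = (cmod (x$1))^2 + (cmod (x$2))^2"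
    using assms unfolding S3_def qf_expand by simp
  show "x$0 \<noteq> 0"
  proof
    assume "x$0 = 0"
    hence "(cmod (x$1))^2 + (cmod (x$2))^2 = 0" using e by simp
    hence "x$1 = 0 \<and> x$2 = 0" by (simp only: sum_power2_eq_zero_iff norm_eq_zero)
    thus False using assms \<open>x$0 = 0\<close> unfolding S3_def by (simp add: vec3_eq)
  qed
qed

lemma null_orth:
  assumes "x \<in> S3" "y \<in> S3" "herm x y = 0"
  shows "\<exists>c. y = c *s x"
proof -
  define c where "c = y$0 / x$0"
  define z where "z = y - c *s x"
  have x0: "x$0 \<noteq> 0" using S3_0 assms by blast
  have z0: "z$0 = 0" unfolding z_def c_def using x0 by simp
  have hxx: "herm x x = 0" using assms(1) unfolding S3_def by (simp add: herm_self)
  have hyy: "herm y y = 0" using assms(2) unfolding S3_def by (simp add: herm_self)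
  have hyx: "herm y x = 0" using assms(3) herm_sym[of x y] by simp
  have "herm z z = 0"
    unfolding z_def herm_diff_left herm_diff_right herm_smult_left herm_smult_right
    using hxx hyy hyx assms(3) by simp
  hence "qf z = 0" by (simp add: herm_self)
  moreover have "qf z = - ((cmod (z$1))^2 + (cmod (z$2))^2)" unfolding qf_expand using z0 by simp
  ultimately have "(cmod (z$1))^2 + (cmod (z$2))^2 = 0" by linarith
  hence "z$1 = 0 \<and> z$2 = 0" by (simp only: sum_power2_eq_zero_iff norm_eq_zero)
  hence "z = 0" using z0 by (simp add: vec3_eq)
  thus ?thesis unfolding z_def by auto
qed



lemma normalize_in:
  assumes "proj_set A" "x \<in> A"
  shows "complex_of_real (1 / norm x) *s x \<in> A" "norm (complex_of_real (1 / norm x) *s x) = 1"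
proof -
  have x0: "x \<noteq> 0" using assms unfolding proj_set_def by blast
  show "complex_of_real (1 / norm x) *s x \<in> A"
    using assms x0 unfolding proj_set_def by simp
  show "norm (complex_of_real (1 / norm x) *s x) = 1"
    unfolding norm_smult using x0 by (simp add: norm_divide)
qed

lemma stepA:
  assumes pB: "proj_set B" and pV: "proj_set V"
    and nB: "B \<noteq> {}" and nV: "V \<noteq> {}"
    and sB: "B \<subseteq> S3" and sV: "V \<subseteq> S3"
    and d: "B \<inter> V = {}"
    and cB: "proj_compact B" and cV: "proj_compact V"
  shows "\<exists>\<delta>>0. \<forall>x\<in>B. \<forall>y\<in>V. \<delta> * norm x * norm y \<le> cmod (herm x y)"
proof -
  define K where "K = {a\<in>B. norm a = 1} \<times> {a\<in>V. norm a = 1}"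
  define f where "f = (\<lambda>z::((complex^3) \<times> (complex^3)). cmod (herm (fst z) (snd z)))"
  have cK: "compact K" unfolding K_def using cB cV unfolding proj_compact_def
    by (intro compact_Times)
  obtain b where b: "b \<in> B" using nB by blast
  obtain v where v: "v \<in> V" using nV by blast
  have neK: "K \<noteq> {}" unfolding K_def using normalize_in[OF pB b] normalize_in[OF pV v] by blast
  have cf: "continuous_on K f" unfolding f_def herm_def
    by (intro continuous_intros)
  obtain z0 where z0: "z0 \<in> K" and zmin: "\<forall>z\<in>K. f z0 \<le> f z"
    using continuous_attains_inf[OF cK neK cf] by blast
  define \<delta> where "\<delta> = f z0"
  have dpos: "\<delta> > 0"
  proof (rule ccontr)
    assume "\<not> \<delta> > 0"
    hence "herm (fst z0) (snd z0) = 0" unfolding \<delta>_def f_def by simp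
    moreover have "fst z0 \<in> S3" "snd z0 \<in> S3" using z0 sB sV unfolding K_def by auto
    ultimately obtain c where c: "snd z0 = c *s fst z0" using null_orth by blast
    have "snd z0 \<noteq> 0" using z0 unfolding K_def by auto
    hence "c \<noteq> 0" using c by auto
    hence "snd z0 \<in> B" using c pB z0 unfolding proj_set_def K_def by auto
    thus False using d z0 unfolding K_def by auto
  qed
  have "\<forall>x\<in>B. \<forall>y\<in>V. \<delta> * norm x * norm y \<le> cmod (herm x y)"
  proof (intro ballI)
    fix x y assume x: "x \<in> B" and y: "y \<in> V"
    have x0: "x \<noteq> 0" using pB x unfolding proj_set_def by blast
    have y0: "y \<noteq> 0" using pV y unfolding proj_set_def by blast
    define xh where "xh = complex_of_real (1 / norm x) *s x"
    define yh where "yh = complex_of_real (1 / norm y) *s y"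
    have "(xh, yh) \<in> K" unfolding K_def xh_def yh_def using normalize_in[OF pB x] normalize_in[OF pV y] by simp
    hence "\<delta> \<le> f (xh, yh)" using zmin unfolding \<delta>_def by blast
    also have "f (xh, yh) = cmod (herm x y) / (norm x * norm y)"
      by (simp add: f_def xh_def yh_def herm_smult_left herm_smult_right norm_mult norm_divide)
    finally have "\<delta> \<le> cmod (herm x y) / (norm x * norm y)" .
    thus "\<delta> * norm x * norm y \<le> cmod (herm x y)"
      using x0 y0 by (simp add: field_simps)
  qed
  thus ?thesis using dpos by blast
qed



lemma dE_nonneg: "0 \<le> dE a b"
proof -
  have "0 \<le> wedge_norm a b"
  proof (cases "a = 0")
    case True thus ?thesis unfolding wedge_norm_def by (simp add: cdot_def)
  next
    case False
    have "0 \<le> wedge_norm b a / norm a" using wedge_proj[OF False, of b] by (metis norm_ge_zero)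
    thus ?thesis using False wedge_sym by (simp add: zero_le_divide_iff)
  qed
  thus ?thesis unfolding dE_def by simp
qed

lemma bound1:
  assumes "herm p y = 0" "p \<noteq> 0"
  shows "cmod (herm y u) \<le> norm y * norm u * dE u p"
proof (cases "u = 0")
  case True thus ?thesis by (simp add: herm_def)
next
  case False
  define t where "t = cdot u p / complex_of_real ((norm p)^2)"
  have "herm y (t *s p) = 0" unfolding herm_smult_right using assms(1) herm_sym[of p y] by simp
  hence "herm y u = herm y (u - t *s p)" unfolding herm_diff_right by simp
  hence "cmod (herm y u) \<le> norm y * norm (u - t *s p)" using herm_le by metis
  also have "norm (u - t *s p) = wedge_norm u p / norm p" unfolding t_def using wedge_proj[OF assms(2)] .
  also have "\<dots> = norm u * dE u p" unfolding dE_def using False assms(2) by simp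
  finally show ?thesis by (simp add: mult.assoc)
qed

lemma bound2:
  assumes "u \<noteq> 0"
  shows "cmod (herm y u') \<le> (norm u' / norm u) * cmod (herm y u) + norm y * norm u' * dE u u'"
proof -
  define t where "t = cdot u' u / complex_of_real ((norm u)^2)"
  define w where "w = u' - t *s u"
  have nu: "norm u > 0" using assms by simp
  have "herm y u' = cnj t * herm y u + herm y w"
    unfolding w_def herm_diff_right herm_smult_right by simp
  hence "cmod (herm y u') \<le> cmod t * cmod (herm y u) + cmod (herm y w)"
    by (metis norm_mult norm_triangle_ineq complex_mod_cnj)
  moreover have "cmod t \<le> norm u' / norm u"
  proof -
    have "cmod t = cmod (cdot u' u) / (norm u)^2" unfolding t_def by (simp add: norm_divide norm_power)
    also have "\<dots> \<le> (norm u * norm u') / (norm u)^2"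
      using cdot_le[of u' u] by (simp add: divide_right_mono)
    also have "\<dots> = norm u' / norm u" using nu by (simp add: power2_eq_square)
    finally show ?thesis .
  qed
  moreover have "cmod (herm y w) \<le> norm y * (norm u' * dE u u')"
  proof -
    have "norm w = wedge_norm u' u / norm u" unfolding w_def t_def using wedge_proj[OF assms] .
    also have "\<dots> = norm u' * dE u u'"
    proof (cases "u' = 0")
      case True thus ?thesis unfolding wedge_norm_def by (simp add: cdot_def)
    next
      case False thus ?thesis unfolding dE_def using nu wedge_sym[of u u'] by simp
    qed
    finally show ?thesis using herm_le[of y w] by simp
  qed
  ultimately show ?thesis
    by (smt (verit, ccfv_SIG) mult_right_mono norm_ge_zero mult.assoc)
qed

lemma bound3:
  assumes x': "x' \<in> S3" and u': "qf u' < 0" and hxu: "herm x' u' = 0"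
    and al: "herm x' y \<noteq> 0"
    and p': "p' \<noteq> 0" "herm p' x' = 0" "herm p' y = 0"
    and P: "Pc x' y \<noteq> 0"
  shows "dE u' p' * (cmod (herm x' y) * sqrt (- qf u')) \<le> cmod (herm u' y) * norm x'"
proof -
  define \<alpha> where "\<alpha> = herm x' y"
  define \<beta> where "\<beta> = herm u' y"
  define q where "q = \<alpha> *s u' - \<beta> *s x'"
  have hux: "herm u' x' = 0" using hxu herm_sym[of x' u'] by simp
  have hxx: "herm x' x' = 0" using x' unfolding S3_def by (simp add: herm_self)
  have hqx: "herm q x' = 0" unfolding q_def herm_diff_left herm_smult_left using hux hxx by simp
  have hqy: "herm q y = 0" unfolding q_def herm_diff_left herm_smult_left \<alpha>_def \<beta>_def by simp
  define s where "s = \<beta> / \<alpha>"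
  have qs: "q = \<alpha> *s (u' - s *s x')"
    unfolding q_def s_def using al \<alpha>_def by (simp add: vec_eq_iff algebra_simps)
  have qfq: "qf (u' - s *s x') = qf u'"
  proof -
    have "herm (u' - s *s x') (u' - s *s x') = herm u' u'"
      unfolding herm_diff_left herm_diff_right herm_smult_left herm_smult_right using hux hxx hxu by simp
    thus ?thesis by (simp add: herm_self)
  qed
  have q0: "q \<noteq> 0"
  proof
    assume "q = 0"
    hence "u' - s *s x' = 0" using qs al \<alpha>_def by (simp add: vec_eq_iff)
    hence "qf u' = 0" using qfq by (simp add: qf_def herm_def)
    thus False using u' by simp
  qed
  obtain c1 where c1: "p' = c1 *s Pc x' y" using par_Pc[OF p'(2,3) P] by blast
  obtain c2 where c2: "q = c2 *s Pc x' y" using par_Pc[OF hqx hqy P] by blast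
  have c1n: "c1 \<noteq> 0" using c1 p' by auto
  have c2n: "c2 \<noteq> 0" using c2 q0 by auto
  have "p' = (c1 / c2) *s q" unfolding c2 c1 using c2n by (simp add: vec_eq_iff)
  hence "dE u' p' = dE u' q" using dE_smult c1n c2n by simp
  also have "\<dots> = dE u' (u' - s *s x')" unfolding qs by (rule dE_smult) (use al \<alpha>_def in simp)
  finally have e1: "dE u' p' = dE u' (u' - s *s x')" .
  have u'0: "u' \<noteq> 0" using u' by (auto simp: qf_def herm_def)
  have w1: "wedge_norm u' (u' - s *s x') = cmod s * wedge_norm x' u'"
  proof -
    have "u' - s *s x' = ((- s) *s x') + 1 *s u'" by (simp add: vec_eq_iff)
    hence "wedge_norm u' (u' - s *s x') = wedge_norm ((- s) *s x') u'"
      using wedge_sym wedge_shift[OF u'0] by metis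
    thus ?thesis using wedge_smult[of "- s" x' u'] by simp
  qed
  have nq: "sqrt (- qf u') \<le> norm (u' - s *s x')"
    using neg_qf_le[of "u' - s *s x'"] qfq by (simp add: real_le_lsqrt real_sqrt_le_iff)
  have sq: "sqrt (- qf u') > 0" using u' by simp
  have "dE u' p' * (cmod \<alpha> * sqrt (- qf u')) \<le> dE u' p' * (cmod \<alpha> * norm (u' - s *s x'))"
    using nq dE_nonneg by (simp add: mult_left_mono)
  also have "\<dots> = cmod \<alpha> * (wedge_norm u' (u' - s *s x') / norm u')"
  proof -
    have nz: "norm (u' - s *s x') \<noteq> 0" using nq sq by linarith
    show ?thesis unfolding e1 unfolding dE_def using u'0 nz by (simp add: field_simps)
  qed
  also have "\<dots> = cmod \<beta> * (wedge_norm x' u' / norm u')"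
    unfolding w1 unfolding s_def using al \<alpha>_def by (simp add: norm_divide field_simps)
  also have "\<dots> \<le> cmod \<beta> * norm x'"
    using wedge_le[of x' u'] u'0 by (simp add: mult_left_mono field_simps)
  finally show ?thesis unfolding \<alpha>_def \<beta>_def .
qed

lemma bound4:
  assumes x': "x' \<in> S3" and v: "v \<in> S3" and hxu: "herm x' u' = 0" and hvu: "herm v u' = 0"
    and P: "Pc x' v \<noteq> 0"
    and dl: "\<delta> * norm x' * norm v \<le> cmod (herm x' v)" and dpos: "\<delta> > 0"
  shows "\<delta> * norm u' \<le> sqrt (- qf u')"
proof -
  have h1: "herm u' x' = 0" using hxu herm_sym[of x' u'] by simp
  have h2: "herm u' v = 0" using hvu herm_sym[of v u'] by simp
  obtain c where c: "u' = c *s Pc x' v" using par_Pc[OF h1 h2 P] by blast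
  have qx: "qf x' = 0" "qf v = 0" using x' v unfolding S3_def by auto
  have "- qf u' = (cmod c)^2 * (cmod (herm x' v))^2" unfolding c qf_smult qf_Pc qx by simp
  also have "\<dots> \<ge> (cmod c)^2 * (\<delta> * norm x' * norm v)^2"
    using dl dpos by (intro mult_left_mono power_mono) auto
  finally have a: "(cmod c)^2 * (\<delta> * norm x' * norm v)^2 \<le> - qf u'" .
  have "(\<delta> * norm u')^2 = \<delta>^2 * ((cmod c)^2 * (norm (Pc x' v))^2)"
    unfolding c norm_smult by (simp add: power_mult_distrib)
  also have "\<dots> \<le> \<delta>^2 * ((cmod c)^2 * ((norm x')^2 * (norm v)^2))"
    using norm_Pc[of x' v] by (intro mult_left_mono) auto
  also have "\<dots> = (cmod c)^2 * (\<delta> * norm x' * norm v)^2" by (simp add: power_mult_distrib)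
  finally have "(\<delta> * norm u')^2 \<le> - qf u'" using a by linarith
  thus ?thesis using dpos by (simp add: real_le_rsqrt)
qed



lemma Pc_nz:
  assumes "x \<in> S3" "y \<in> S3" "herm x y \<noteq> 0"
  shows "Pc x y \<noteq> 0"
proof
  assume "Pc x y = 0"
  hence "qf (Pc x y) = 0" by (simp add: qf_def herm_def)
  moreover have "qf x = 0" "qf y = 0" using assms unfolding S3_def by auto
  ultimately show False using qf_Pc[of x y] assms(3) by simp
qed

lemma pi_props:
  assumes "x \<in> S3" "y \<in> S3" "herm x y \<noteq> 0"
  shows "proj_pi x y \<noteq> 0 \<and> herm (proj_pi x y) x = 0 \<and> herm (proj_pi x y) y = 0"
proof -
  have "\<exists>p. p \<noteq> 0 \<and> herm p x = 0 \<and> herm p y = 0"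
    using Pc_nz[OF assms] herm_Pc by blast
  thus ?thesis unfolding proj_pi_def by (rule someI_ex)
qed

theorem lemma5p12:
  fixes B V :: "(complex^3) set"
  assumes "proj_set B" and "proj_set V"
    and "B \<noteq> {}" and "V \<noteq> {}"
    and "B \<subseteq> S3" and "V \<subseteq> S3"
    and "B \<inter> V = {}"
    and "proj_compact B" and "proj_compact V"
  shows "\<exists>C>0. \<forall>x\<in>B. \<forall>x'\<in>B. \<forall>u\<in>LC. \<forall>u'\<in>LC. \<forall>r>0.
           x \<in> chain u \<and> x' \<in> chain u' \<and> chain u \<inter> V \<noteq> {} \<and> chain u' \<inter> V \<noteq> {} \<longrightarrow>
           pi_inv x (dball u r) \<inter> V \<subseteq> pi_inv x' (dball u' (C * (r + dE u u')))"
proof -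
  obtain \<delta> where dpos: "\<delta> > 0" and dl: "\<forall>x\<in>B. \<forall>y\<in>V. \<delta> * norm x * norm y \<le> cmod (herm x y)"
    using stepA[OF assms] by blast
  have pB: "proj_set B" and pV: "proj_set V" and sB: "B \<subseteq> S3" and sV: "V \<subseteq> S3"
    and dj: "B \<inter> V = {}" using assms by auto
  have nz: "\<And>x y. x \<in> B \<Longrightarrow> y \<in> V \<Longrightarrow> herm x y \<noteq> 0"
  proof -
    fix x y assume x: "x \<in> B" and y: "y \<in> V"
    have "x \<noteq> 0" "y \<noteq> 0" using x y pB pV unfolding proj_set_def by auto
    hence "\<delta> * norm x * norm y > 0" using dpos by simp
    thus "herm x y \<noteq> 0" using dl x y by fastforce
  qed
  have "\<forall>x\<in>B. \<forall>x'\<in>B. \<forall>u\<in>LC. \<forall>u'\<in>LC. \<forall>r>0.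
           x \<in> chain u \<and> x' \<in> chain u' \<and> chain u \<inter> V \<noteq> {} \<and> chain u' \<inter> V \<noteq> {} \<longrightarrow>
           pi_inv x (dball u r) \<inter> V \<subseteq> pi_inv x' (dball u' ((1 / \<delta>^2) * (r + dE u u')))"
  proof (intro ballI allI impI subsetI)
    fix x x' u u' r y
    assume x: "x \<in> B" and x': "x' \<in> B" and u: "u \<in> LC" and u': "u' \<in> LC" and r: "r > 0"
      and H: "x \<in> chain u \<and> x' \<in> chain u' \<and> chain u \<inter> V \<noteq> {} \<and> chain u' \<inter> V \<noteq> {}"
      and yin: "y \<in> pi_inv x (dball u r) \<inter> V"
    have yV: "y \<in> V" and yS: "y \<in> S3" and pd: "proj_pi x y \<in> dball u r"
      using yin unfolding pi_inv_def by auto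
    have xS: "x \<in> S3" and x'S: "x' \<in> S3" using x x' sB by auto
    have hxu: "herm x u = 0" and hx'u': "herm x' u' = 0" using H unfolding chain_def by auto
    obtain v' where v'V: "v' \<in> V" and v'c: "v' \<in> chain u'" using H by blast
    have v'S: "v' \<in> S3" and hv'u': "herm v' u' = 0" using v'c unfolding chain_def by auto
    have y0: "y \<noteq> 0" and x'0: "x' \<noteq> 0" using yS x'S unfolding S3_def by auto
    have u0: "u \<noteq> 0" and u'0: "u' \<noteq> 0" using u u' unfolding LC_def by (auto simp: qf_def herm_def)
    have qu': "qf u' < 0" using u' unfolding LC_def by simp
    define p where "p = proj_pi x y"
    define p' where "p' = proj_pi x' y"
    have pp: "p \<noteq> 0 \<and> herm p x = 0 \<and> herm p y = 0"
      unfolding p_def using pi_props[OF xS yS nz[OF x yV]] .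
    have pp': "p' \<noteq> 0 \<and> herm p' x' = 0 \<and> herm p' y = 0"
      unfolding p'_def using pi_props[OF x'S yS nz[OF x' yV]] .
    have dup: "dE u p \<le> r" using pd unfolding p_def dball_def by simp
    have b1: "cmod (herm y u) \<le> norm y * norm u * dE u p" using bound1[of p y u] pp by simp
    have b2: "cmod (herm y u') \<le> (norm u' / norm u) * cmod (herm y u) + norm y * norm u' * dE u u'"
      using bound2[OF u0] .
    have "(norm u' / norm u) * cmod (herm y u) \<le> (norm u' / norm u) * (norm y * norm u * dE u p)"
      by (rule mult_left_mono[OF b1]) simp
    also have "\<dots> = norm u' * norm y * dE u p" using u0 by simp
    finally have "cmod (herm y u') \<le> norm u' * norm y * (dE u p + dE u u')"
      using b2 by (simp add: algebra_simps)
    hence A: "cmod (herm u' y) \<le> norm u' * norm y * (r + dE u u')"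
      using dup herm_sym[of u' y] y0 u'0
      by (smt (verit, best) complex_mod_cnj mult_left_mono mult_nonneg_nonneg norm_ge_zero)
    have b3: "dE u' p' * (cmod (herm x' y) * sqrt (- qf u')) \<le> cmod (herm u' y) * norm x'"
      using bound3[OF x'S qu' hx'u' nz[OF x' yV] _ _ _ Pc_nz[OF x'S yS nz[OF x' yV]]] pp' by blast
    have b4: "\<delta> * norm u' \<le> sqrt (- qf u')"
      using bound4[OF x'S v'S hx'u' hv'u' Pc_nz[OF x'S v'S nz[OF x' v'V]] _ dpos] dl x' v'V by blast
    have al: "\<delta> * norm x' * norm y \<le> cmod (herm x' y)" using dl x' yV by blast
    define M where "M = norm x' * norm y * norm u'"
    have M: "M > 0" unfolding M_def using x'0 y0 u'0 by simp
    have dnn: "0 \<le> dE u' p'" by (rule dE_nonneg)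
    have "dE u' p' * (\<delta>^2 * M) = dE u' p' * ((\<delta> * norm x' * norm y) * (\<delta> * norm u'))"
      unfolding M_def by (simp add: power2_eq_square algebra_simps)
    also have "\<dots> \<le> dE u' p' * (cmod (herm x' y) * sqrt (- qf u'))"
      using al b4 dnn dpos by (intro mult_left_mono mult_mono) auto
    also have "\<dots> \<le> cmod (herm u' y) * norm x'" by (rule b3)
    also have "\<dots> \<le> (norm u' * norm y * (r + dE u u')) * norm x'"
      using A by (simp add: mult_right_mono)
    also have "\<dots> = (r + dE u u') * M" unfolding M_def by (simp add: algebra_simps)
    finally have "dE u' p' * (\<delta>^2 * M) \<le> (r + dE u u') * M" .
    hence "dE u' p' * \<delta>^2 \<le> r + dE u u'" using M by (simp add: mult.assoc[symmetric])
    hence dfin: "dE u' p' \<le> (1 / \<delta>^2) * (r + dE u u')" using dpos by (simp add: field_simps)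
    have npe: "\<not> proj_eq x' y"
    proof
      assume "proj_eq x' y"
      then obtain c where "c \<noteq> 0" "y = c *s x'" unfolding proj_eq_def by blast
      hence "y \<in> B" using pB x' unfolding proj_set_def by blast
      thus False using dj yV by blast
    qed
    show "y \<in> pi_inv x' (dball u' ((1 / \<delta>^2) * (r + dE u u')))"
      unfolding pi_inv_def dball_def using yS npe pp' dfin unfolding p'_def by simp
  qed
  moreover have "1 / \<delta>^2 > 0" using dpos by simp
  ultimately show ?thesis by blast
qed


end
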